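(* Let $0<q<1$, $s\ge2$, $\alpha\in\mathbb{R}\setminus\mathbb{Z}_-$. For $j=1,\dots,s-1$ let $a_j>0$, $c_j>0$ be real and $b_j,d_j\in\mathbb{C}$ such that $a_jn+\mathrm{Re}(b_j)\notin\mathbb{Z}_-$ and $c_jn+\mathrm{Re}(d_j)\notin\mathbb{Z}_-$ for all positive integers $n$. Put $A=\dfrac{[a_1]_q\cdots[a_{s-1}]_q}{[c_1]_q\cdots[c_{s-1}]_q}$ and $$\lambda_n=\frac{q^{n+\alpha}\,[n]_{q^{c_1}}\cdots[n]_{q^{c_{s-1}}}}{[n]_q\,[n]_{q^{a_1}}\cdots[n]_{q^{a_{s-1}}}}(q-1).$$ Then, uniformly on compact subsets of $\mathbb{C}$, $$\lim_{n\to+\infty}{}_s\phi_s\!\left(\begin{array}{c}q^{-n},q^{a_1n+b_1},\dots,q^{a_{s-1}n+b_{s-1}}\\ q^{\alpha},q^{c_1n+d_1},\dots,q^{c_{s-1}n+d_{s-1}}\end{array};q,\lambda_n z\right)={}_0\phi_1\!\left(\begin{array}{c}-\\ q^{\alpha}\end{array};q,-Az(q-1)^2q^{\alpha}\right)=(Az)^{\frac{1-\alpha}{2}}\,\Gamma_q(\alpha)\,J^{(2)}_{\alpha-1}\!\left(2(1-q)\sqrt{Az};q\right).$$ For $s=1$ one has, uniformly on compact subsets of $\mathbb{C}$, $$\lim_{n\to+\infty}{}_1\phi_1\!\left(\begin{array}{c}q^{-n}\\ q^{\alpha}\end{array};q,\frac{q^{n+\alpha}}{[n]_q}(q-1)z\right)={}_0\phi_1\!\left(\begin{array}{c}-\\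 q^{\alpha}\end{array};q,-z(q-1)^2q^{\alpha}\right)=z^{\frac{1-\alpha}{2}}\Gamma_q(\alpha)J^{(2)}_{\alpha-1}\!\left(2(1-q)\sqrt z;q\right).$$ (Powers and square roots in the last expressions are taken with principal branches, and the product $(Az)^{\frac{1-\alpha}{2}}J^{(2)}_{\alpha-1}(\cdot)$ is understood as the entire function given by the ${}_0\phi_1$ expression.)
   Context: $\mathbb{Z}_-=\{0,-1,-2,\dots\}$. For $w\in\mathbb{C}$, $q^{w}:=e^{w\ln q}$. For $a\in\mathbb{C}$: $(a;q)_0=1$, $(a;q)_k=\prod_{j=0}^{k-1}(1-aq^{j})$, $(a;q)_\infty=\prod_{j\ge0}(1-aq^{j})$, and $(a_1,\dots,a_r;q)_k=\prod_{i=1}^r(a_i;q)_k$. The $q$-number is $[z]_q=\dfrac{1-q^{z}}{1-q}$, and $[n]_{q^{a}}=\dfrac{1-q^{an}}{1-q^{a}}$. The basic hypergeometric series is $${}_r\phi_s\!\left(\begin{array}{c}a_1,\dots,a_r\\ b_1,\dots,b_s\end{array};q,z\right)=\sum_{k=0}^{\infty}\frac{(a_1,\dots,a_r;q)_k}{(b_1,\dots,b_s;q)_k}(-1)^{(1+s-r)k}q^{(1+s-r)\binom{k}{2}}\frac{z^k}{(q;q)_k};$$ when one numerator parameter is $q^{-n}$ it is a polynomial in $z$ of degree at most $n$; "$-$" denotes an empty parameter list. The $q$-Gamma function is $\Gamma_q(z)=\dfrac{(q;q)_\infty}{(q^{z};q)_\infty}(1-q)^{1-z}$. The $q$-Bessel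 function is $J^{(2)}_{\nu}(x;q)=\dfrac{(q^{\nu+1};q)_\infty}{(q;q)_\infty}\left(\dfrac{x}{2}\right)^{\nu}{}_0\phi_1\!\left(\begin{array}{c}-\\ q^{\nu+1}\end{array};q,-\dfrac{q^{\nu+1}x^2}{4}\right)$. *)

theory Defs
  imports "HOL-Analysis.Analysis"
begin

definition qpow :: "real \<Rightarrow> complex \<Rightarrow> complex" where
  "qpow q w = exp (w * of_real (ln q))"

definition qpoch :: "complex \<Rightarrow> real \<Rightarrow> nat \<Rightarrow> complex" where
  "qpoch a q k = (\<Prod>j<k. 1 - a * of_real q ^ j)"

definition qpochs :: "complex list \<Rightarrow> real \<Rightarrow> nat \<Rightarrow> complex" where
  "qpochs as q k = prod_list (map (\<lambda>a. qpoch a q k) as)"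

definition qpoch_inf :: "complex \<Rightarrow> real \<Rightarrow> complex" where
  "qpoch_inf a q = (\<Prod>j. 1 - a * of_real q ^ j)"

definition bhyp :: "complex list \<Rightarrow> complex list \<Rightarrow> real \<Rightarrow> complex \<Rightarrow> complex" where
  "bhyp as bs q z =
     (\<Sum>k. qpochs as q k / qpochs bs q k
           * ((-1) ^ k * of_real q ^ (k choose 2)) powi (1 + int (length bs) - int (length as))
           * z ^ k / qpoch (of_real q) q k)"

definition qnum :: "real \<Rightarrow> complex \<Rightarrow> complex" where
  "qnum q z = (1 - qpow q z) / (1 - of_real q)"

definition qnum_base :: "real \<Rightarrow> real \<Rightarrow> nat \<Rightarrow> real" where
  "qnum_base q a n = (1 - q powr (a * real n)) / (1 - q powr a)"

definition qGamma :: "real \<Rightarrow> complex \<Rightarrow> complex" where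
  "qGamma q z = qpoch_inf (of_real q) q / qpoch_inf (qpow q z) q * qpow (1 - q) (1 - z)"

definition qBesselJ2 :: "complex \<Rightarrow> complex \<Rightarrow> real \<Rightarrow> complex" where
  "qBesselJ2 \<nu> x q = qpoch_inf (qpow q (\<nu> + 1)) q / qpoch_inf (of_real q) q
      * (x / 2) powr \<nu> * bhyp [] [qpow q (\<nu> + 1)] q (- qpow q (\<nu> + 1) * x ^ 2 / 4)"

end

theory Submission
  imports Defs
begin


lemma qpow_real: "q > 0 \<Longrightarrow> qpow q (of_real x) = of_real (q powr x)"
  by (simp add: qpow_def powr_def exp_of_real[symmetric] mult.commute)

lemma qpoch_inf_nonzero:
  assumes q: "0 < q" "q < 1" and nz: "\<And>j. w * of_real q ^ j \<noteq> 1"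
  shows "qpoch_inf w q \<noteq> 0"
proof -
  have "summable (\<lambda>j. norm (- w * of_real q ^ j))"
    using q by (simp add: norm_mult norm_power summable_mult summable_geometric)
  then have "convergent_prod (\<lambda>j. 1 + (- w * of_real q ^ j))"
    by (rule summable_imp_convergent_prod_complex) (use nz in auto)
  then have "convergent_prod (\<lambda>j. 1 - w * of_real q ^ j)" by simp
  then show ?thesis unfolding qpoch_inf_def
    by (rule prodinf_nonzero) (use nz in auto)
qed

lemma part2:
  fixes q \<alpha> A :: real and z :: complex
  assumes q: "0 < q" "q < 1" and \<alpha>: "\<alpha> \<notin> \<int>\<^sub>\<le>\<^sub>0" and Az: "of_real A * z \<noteq> 0"
  shows "bhyp [] [qpow q (of_real \<alpha>)] q (- of_real A * z * of_real ((q - 1)^2) * qpow q (of_real \<alpha>))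
           = (of_real A * z) powr (of_real ((1 - \<alpha>) / 2)) * qGamma q (of_real \<alpha>)
             * qBesselJ2 (of_real (\<alpha> - 1)) (2 * of_real (1 - q) * csqrt (of_real A * z)) q"
proof -
  define w where "w = of_real A * z"
  define P where "P = qpoch_inf (of_real q) q"
  define Q where "Q = qpoch_inf (qpow q (of_real \<alpha>)) q"
  have P0: "P \<noteq> 0" unfolding P_def
  proof (rule qpoch_inf_nonzero[OF q])
    fix j :: nat
    have "q ^ j \<le> 1" using q by (simp add: power_le_one)
    hence "q * q ^ j \<le> q * 1" by (rule mult_left_mono) (use q in auto)
    hence "q * q ^ j < 1" using q by linarith
    hence "q * q ^ j \<noteq> 1" by simp
    thus "of_real q * of_real q ^ j \<noteq> (1::complex)"
      by (metis of_real_1 of_real_eq_iff of_real_mult of_real_power)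
  qed
  have Q0: "Q \<noteq> 0" unfolding Q_def
  proof (rule qpoch_inf_nonzero[OF q])
    fix j :: nat
    have "\<alpha> + real j \<noteq> 0"
    proof
      assume "\<alpha> + real j = 0"
      hence "\<alpha> = - of_nat j" by simp
      thus False using \<alpha> by auto
    qed
    hence "q powr (\<alpha> + real j) \<noteq> 1" using q by (simp add: powr_eq_one_iff_gen)
    hence "q powr \<alpha> * q ^ j \<noteq> 1" using q by (simp add: powr_add powr_realpow)
    thus "qpow q (of_real \<alpha>) * of_real q ^ j \<noteq> 1" using q
      by (simp add: qpow_real) (metis of_real_1 of_real_eq_iff of_real_mult of_real_power)
  qed
  have nu: "(of_real (\<alpha> - 1) + 1 :: complex) = of_real \<alpha>" by simp
  have pw: "w powr (of_real ((1 - \<alpha>) / 2)) * (of_real (1 - q) * csqrt w) powr (of_real (\<alpha> - 1))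
            * qpow (1 - q) (1 - of_real \<alpha>) = 1"
  proof -
    have w0: "w \<noteq> 0" using Az w_def by simp
    have s0: "csqrt w \<noteq> 0" using w0 by simp
    have "Ln (csqrt w) = Ln w / 2"
      using w0 mpi_less_Im_Ln[of w] Im_Ln_le_pi[of w] by (simp add: csqrt_exp_Ln)
    moreover have "Ln (of_real (1 - q) * csqrt w) = of_real (ln (1 - q)) + Ln (csqrt w)"
      using Ln_times_of_real[of "1-q" "csqrt w"] q s0 Ln_of_real[of "1-q"] by simp
    ultimately have L: "Ln (of_real (1 - q) * csqrt w) = of_real (ln (1 - q)) + Ln w / 2" by simp
    hence L': "Ln ((1 - of_real q) * csqrt w) = of_real (ln (1 - q)) + Ln w / 2" by simp
    have "w powr (of_real ((1 - \<alpha>) / 2)) * (of_real (1 - q) * csqrt w) powr (of_real (\<alpha> - 1))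
            * qpow (1 - q) (1 - of_real \<alpha>)
        = exp (of_real ((1 - \<alpha>) / 2) * Ln w + of_real (\<alpha> - 1) * (of_real (ln (1 - q)) + Ln w / 2)
               + (1 - of_real \<alpha>) * of_real (ln (1 - q)))"
      using w0 s0 q by (simp add: powr_def L' qpow_def exp_add)
    also have "\<dots> = exp 0"
      by (rule arg_cong[where f = exp]) (simp add: field_simps)
    finally show ?thesis by simp
  qed
  have arg: "- qpow q (of_real (\<alpha> - 1) + 1) * (2 * of_real (1 - q) * csqrt w) ^ 2 / 4
      = - of_real A * z * of_real ((q - 1)^2) * qpow q (of_real \<alpha>)"
  proof -
    have "(2 * of_real (1 - q) * csqrt w) ^ 2 / 4 = (of_real (1 - q))^2 * w"
    proof -
      have "(2 * of_real (1 - q) * csqrt w) ^ 2 / 4 = (of_real (1 - q))^2 * (csqrt w)^2"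
        unfolding power_mult_distrib by simp
      thus ?thesis by (simp only: power2_csqrt)
    qed
    also have "(of_real (1 - q))^2 = (of_real ((q - 1)^2) :: complex)"
      by (simp add: power2_eq_square algebra_simps)
    finally show ?thesis unfolding nu w_def by (simp add: algebra_simps)
  qed
  have half: "2 * of_real (1 - q) * csqrt w / 2 = of_real (1 - q) * csqrt w" by simp
  define B where "B = bhyp [] [qpow q (of_real \<alpha>)] q (- of_real A * z * of_real ((q - 1)^2) * qpow q (of_real \<alpha>))"
  have J: "qBesselJ2 (of_real (\<alpha> - 1)) (2 * of_real (1 - q) * csqrt w) q
     = Q / P * (of_real (1 - q) * csqrt w) powr (of_real (\<alpha> - 1)) * B"
    unfolding qBesselJ2_def arg half B_def unfolding nu Q_def P_def ..
  have "w powr (of_real ((1 - \<alpha>) / 2)) * qGamma q (of_real \<alpha>)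
             * qBesselJ2 (of_real (\<alpha> - 1)) (2 * of_real (1 - q) * csqrt w) q
      = (w powr (of_real ((1 - \<alpha>) / 2)) * (of_real (1 - q) * csqrt w) powr (of_real (\<alpha> - 1))
            * qpow (1 - q) (1 - of_real \<alpha>)) * (P / Q * (Q / P)) * B"
    unfolding J unfolding qGamma_def P_def[symmetric] Q_def[symmetric]
    by (simp add: algebra_simps)
  also have "\<dots> = B" using pw P0 Q0 by simp
  finally show ?thesis unfolding B_def w_def by simp
qed


lemma ul_sum:
  fixes a :: "nat \<Rightarrow> nat \<Rightarrow> 'b \<Rightarrow> complex"
  assumes "\<And>k. uniform_limit K (a k) (g k) F"
  shows "uniform_limit K (\<lambda>n z. \<Sum>k<m. a k n z) (\<lambda>z. \<Sum>k<m. g k z) F"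
proof (induction m)
  case 0
  show ?case using uniform_limit_const[where S=K and c="\<lambda>z. 0::complex" and f=F] by simp
next
  case (Suc m)
  show ?case unfolding sum.lessThan_Suc
    by (rule uniform_limit_add[OF Suc assms])
qed

lemma unif_tannery:
  fixes a :: "nat \<Rightarrow> nat \<Rightarrow> 'b \<Rightarrow> complex" and g :: "nat \<Rightarrow> 'b \<Rightarrow> complex"
  assumes lim: "\<And>k. uniform_limit K (a k) (g k) sequentially"
    and bound: "\<And>k n z. n \<ge> N \<Longrightarrow> z \<in> K \<Longrightarrow> norm (a k n z) \<le> M k"
    and sm: "summable M"
  shows "uniform_limit K (\<lambda>n z. \<Sum>k. a k n z) (\<lambda>z. \<Sum>k. g k z) sequentially"
proof -
  have gb: "norm (g k z) \<le> M k" if "z \<in> K" for k z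
  proof (rule tendsto_upperbound)
    show "((\<lambda>n. norm (a k n z)) \<longlongrightarrow> norm (g k z)) sequentially"
      by (intro tendsto_intros tendsto_uniform_limitI[OF lim that])
    show "eventually (\<lambda>n. norm (a k n z) \<le> M k) sequentially"
      using bound that unfolding eventually_sequentially by blast
  qed simp
  have sa: "summable (\<lambda>k. norm (a k n z))" if "n \<ge> N" "z \<in> K" for n z
    by (rule summable_comparison_test[OF _ sm]) (use bound that in auto)
  have sg: "summable (\<lambda>k. norm (g k z))" if "z \<in> K" for z
    by (rule summable_comparison_test[OF _ sm]) (use gb that in auto)
  show ?thesis unfolding uniform_limit_sequentially_iff
  proof (intro allI impI)
    fix e :: real assume e: "e > 0"
    obtain m where m: "norm (\<Sum>i. M (i + m)) < e / 3"
      using suminf_exist_split[of "e/3" M] e sm by auto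
    have smm: "summable (\<lambda>i. M (i + m))" using sm by (rule summable_ignore_initial_segment)
    obtain N1 where N1: "\<And>n z. n \<ge> N1 \<Longrightarrow> z \<in> K \<Longrightarrow>
        dist (\<Sum>k<m. a k n z) (\<Sum>k<m. g k z) < e / 3"
      using ul_sum[OF lim, where m=m] e unfolding uniform_limit_sequentially_iff
      by (meson divide_pos_pos zero_less_numeral)
    show "\<exists>N'. \<forall>n\<ge>N'. \<forall>z\<in>K. dist (\<Sum>k. a k n z) (\<Sum>k. g k z) < e"
    proof (intro exI allI impI ballI)
      fix n z assume n: "max N N1 \<le> n" and z: "z \<in> K"
      have sa1: "summable (\<lambda>k. norm (a k n z))" using sa n z by auto
      have sg1: "summable (\<lambda>k. norm (g k z))" using sg z by auto
      have sa2: "summable (\<lambda>k. norm (a (k + m) n z))"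
        using summable_ignore_initial_segment[OF sa1, of m] .
      have sg2: "summable (\<lambda>k. norm (g (k + m) z))"
        using summable_ignore_initial_segment[OF sg1, of m] .
      have ea: "(\<Sum>k. a k n z) = (\<Sum>k. a (k + m) n z) + (\<Sum>k<m. a k n z)"
        by (rule suminf_split_initial_segment) (rule summable_norm_cancel[OF sa1])
      have eg: "(\<Sum>k. g k z) = (\<Sum>k. g (k + m) z) + (\<Sum>k<m. g k z)"
        by (rule suminf_split_initial_segment) (rule summable_norm_cancel[OF sg1])
      have ta: "norm (\<Sum>k. a (k + m) n z) \<le> (\<Sum>k. M (k + m))"
      proof -
        have "norm (\<Sum>k. a (k + m) n z) \<le> (\<Sum>k. norm (a (k + m) n z))"
          by (rule summable_norm[OF sa2])
        also have "\<dots> \<le> (\<Sum>k. M (k + m))"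
          by (rule suminf_le) (use bound n z sa2 smm in auto)
        finally show ?thesis .
      qed
      have tg: "norm (\<Sum>k. g (k + m) z) \<le> (\<Sum>k. M (k + m))"
      proof -
        have "norm (\<Sum>k. g (k + m) z) \<le> (\<Sum>k. norm (g (k + m) z))"
          by (rule summable_norm[OF sg2])
        also have "\<dots> \<le> (\<Sum>k. M (k + m))"
          by (rule suminf_le) (use gb z sg2 smm in auto)
        finally show ?thesis .
      qed
      have d: "dist (\<Sum>k<m. a k n z) (\<Sum>k<m. g k z) < e / 3" using N1 n z by auto
      have "(\<Sum>k. M (k + m)) < e / 3" using m by (metis abs_less_iff real_norm_def)
      moreover have "dist (\<Sum>k. a k n z) (\<Sum>k. g k z) \<le> norm (\<Sum>k. a (k + m) n z) + norm (\<Sum>k. g (k + m) z) + dist (\<Sum>k<m. a k n z) (\<Sum>k<m. g k z)"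
      proof -
        have "dist (\<Sum>k. a k n z) (\<Sum>k. g k z) = norm (((\<Sum>k. a (k + m) n z) - (\<Sum>k. g (k + m) z)) + ((\<Sum>k<m. a k n z) - (\<Sum>k<m. g k z)))"
          unfolding ea eg dist_norm by (simp add: algebra_simps)
        also have "\<dots> \<le> norm ((\<Sum>k. a (k + m) n z) - (\<Sum>k. g (k + m) z)) + norm ((\<Sum>k<m. a k n z) - (\<Sum>k<m. g k z))"
          by (rule norm_triangle_ineq)
        also have "norm ((\<Sum>k. a (k + m) n z) - (\<Sum>k. g (k + m) z)) \<le> norm (\<Sum>k. a (k + m) n z) + norm (\<Sum>k. g (k + m) z)"
          by (rule norm_triangle_ineq4)
        finally show ?thesis by (simp add: dist_norm)
      qed
      ultimately show "dist (\<Sum>k. a k n z) (\<Sum>k. g k z) < e" using ta tg d by linarith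
    qed
  qed
qed


lemma qpoch_tendsto_1:
  assumes "(w \<longlongrightarrow> 0) F"
  shows "((\<lambda>n. qpoch (w n) q k) \<longlongrightarrow> 1) F"
proof -
  have "((\<lambda>n. \<Prod>j<k. 1 - w n * of_real q ^ j) \<longlongrightarrow> (\<Prod>j<k. 1 - 0 * of_real q ^ j)) F"
    by (intro tendsto_prod tendsto_intros assms)
  thus ?thesis unfolding qpoch_def by simp
qed

lemma qpoch_le:
  assumes q: "0 < q" "q < 1" and w: "norm w \<le> 1"
  shows "norm (qpoch w q k) \<le> 2 ^ k"
proof -
  have "norm (qpoch w q k) = (\<Prod>j<k. norm (1 - w * of_real q ^ j))"
    unfolding qpoch_def by (simp add: prod_norm)
  also have "\<dots> \<le> (\<Prod>j<k. 2)"
  proof (rule prod_mono)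
    fix j assume "j \<in> {..<k}"
    have "q ^ j \<le> 1" using q by (simp add: power_le_one)
    hence "norm w * q ^ j \<le> 1 * 1" using w q by (intro mult_mono) auto
    hence "norm (w * of_real q ^ j) \<le> 1" using q by (simp add: norm_mult norm_power)
    hence "norm (1 - w * of_real q ^ j) \<le> 2"
      using norm_triangle_ineq4[of 1 "w * of_real q ^ j"] by simp
    thus "0 \<le> norm (1 - w * of_real q ^ j) \<and> norm (1 - w * of_real q ^ j) \<le> 2" by simp
  qed
  finally show ?thesis by simp
qed

lemma qpoch_ge_aux:
  assumes d: "\<And>j. \<delta> \<le> norm (1 - w * of_real q ^ j)" and "0 \<le> \<delta>"
  shows "\<delta> ^ k \<le> norm (qpoch w q k)"
proof -
  have "(\<Prod>j<k. \<delta>) \<le> (\<Prod>j<k. norm (1 - w * of_real q ^ j))"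
    by (rule prod_mono) (use d assms(2) in auto)
  thus ?thesis unfolding qpoch_def by (simp add: prod_norm)
qed

lemma qpoch_ge_half:
  assumes q: "0 < q" "q < 1" and w: "norm w \<le> 1/2"
  shows "(1/2) ^ k \<le> norm (qpoch w q k)"
proof (rule qpoch_ge_aux)
  fix j :: nat
  have "q ^ j \<le> 1" using q by (simp add: power_le_one)
  hence "norm w * q ^ j \<le> 1/2 * 1" using w q by (intro mult_mono) auto
  hence "norm (w * of_real q ^ j) \<le> 1/2" using q by (simp add: norm_mult norm_power)
  thus "1/2 \<le> norm (1 - w * of_real q ^ j)"
    using norm_triangle_ineq2[of 1 "w * of_real q ^ j"] by simp
qed simp

lemma qpoch_lower:
  assumes q: "0 < q" "q < 1" and nz: "\<And>j. w * of_real q ^ j \<noteq> 1"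
  shows "\<exists>\<delta>>0. \<forall>k. \<delta> ^ k \<le> norm (qpoch w q k)"
proof -
  have "(\<lambda>j. w * of_real q ^ j) \<longlonglongrightarrow> w * 0"
    using q by (intro tendsto_intros LIMSEQ_power_zero) auto
  hence "eventually (\<lambda>j. norm (w * of_real q ^ j) < 1/2) sequentially"
    by (intro order_tendstoD) (auto intro: tendsto_norm_zero)
  then obtain N where N: "\<And>j. j \<ge> N \<Longrightarrow> norm (w * of_real q ^ j) < 1/2"
    unfolding eventually_sequentially by blast
  define \<delta> where "\<delta> = Min (insert (1/2) ((\<lambda>j. norm (1 - w * of_real q ^ j)) ` {..<N}))"
  have pos: "\<delta> > 0" unfolding \<delta>_def using nz by (subst Min_gr_iff) auto
  have "\<delta> \<le> norm (1 - w * of_real q ^ j)" for j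
  proof (cases "j < N")
    case True thus ?thesis unfolding \<delta>_def by (intro Min_le) auto
  next
    case False
    hence "norm (w * of_real q ^ j) < 1/2" using N by auto
    hence "1/2 \<le> norm (1 - w * of_real q ^ j)"
      using norm_triangle_ineq2[of 1 "w * of_real q ^ j"] by simp
    moreover have "\<delta> \<le> 1/2" unfolding \<delta>_def by (intro Min_le) auto
    ultimately show ?thesis by linarith
  qed
  with pos show ?thesis by (intro exI[of _ \<delta>]) (auto intro: qpoch_ge_aux)
qed

lemma prod_qpow_binom: "(\<Prod>j<k. (x::'a::comm_monoid_mult) ^ j) = x ^ (k choose 2)"
proof (induction k)
  case (Suc k)
  have "(Suc k choose (Suc (Suc 0))) = (k choose (Suc 0)) + (k choose (Suc (Suc 0)))" by (rule binomial_Suc_Suc)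
  hence "(Suc k choose 2) = (k choose 2) + k" by (simp add: numeral_2_eq_2)
  thus ?case using Suc by (simp add: power_add)
qed (simp add: numeral_2_eq_2)

lemma ul_poly_term:
  fixes X :: "nat \<Rightarrow> complex"
  assumes X: "X \<longlonglongrightarrow> L" and R: "\<And>z. z \<in> K \<Longrightarrow> norm z \<le> R"
  shows "uniform_limit K (\<lambda>n z. X n * z ^ k) (\<lambda>z. L * z ^ k) sequentially"
  unfolding uniform_limit_sequentially_iff
proof (intro allI impI)
  fix e :: real assume e: "e > 0"
  define B where "B = (max R 0) ^ k + 1"
  have B: "B > 0" unfolding B_def using zero_le_power[of "max R 0" k] by linarith
  obtain N where N: "\<And>n. n \<ge> N \<Longrightarrow> dist (X n) L < e / B"
    using X e B unfolding lim_sequentially by (meson divide_pos_pos)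
  show "\<exists>N. \<forall>n\<ge>N. \<forall>z\<in>K. dist (X n * z ^ k) (L * z ^ k) < e"
  proof (intro exI allI impI ballI)
    fix n z assume n: "N \<le> n" and z: "z \<in> K"
    have "norm (z ^ k) \<le> (max R 0) ^ k" unfolding norm_power
      using R[OF z] by (intro power_mono) auto
    hence zk: "norm (z ^ k) \<le> B" unfolding B_def by simp
    have "dist (X n * z ^ k) (L * z ^ k) = norm (X n - L) * norm (z ^ k)"
      by (simp add: dist_norm norm_mult[symmetric] left_diff_distrib)
    also have "\<dots> \<le> norm (X n - L) * B" by (rule mult_left_mono[OF zk]) simp
    also have "\<dots> < e / B * B"
      using N[OF n] B by (intro mult_strict_right_mono) (auto simp: dist_norm)
    finally show "dist (X n * z ^ k) (L * z ^ k) < e" using B by simp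
  qed
qed

lemma summable_binom_geom:
  fixes q X :: real
  assumes q: "0 < q" "q < 1" and X: "X \<ge> 0"
  shows "summable (\<lambda>k. X ^ k * q ^ (k choose 2))"
proof -
  have "(\<lambda>k. X * q ^ k) \<longlonglongrightarrow> X * 0" using q by (intro tendsto_mult tendsto_const LIMSEQ_power_zero) auto
  hence "eventually (\<lambda>k. X * q ^ k < 1/2) sequentially" by (intro order_tendstoD) auto
  then obtain N where N: "\<And>k. k \<ge> N \<Longrightarrow> X * q ^ k < 1/2" unfolding eventually_sequentially by blast
  show ?thesis proof (rule summable_ratio_test[of "1/2" N])
  show "\<And>k. k \<ge> N \<Longrightarrow> norm (X ^ Suc k * q ^ (Suc k choose 2)) \<le> 1/2 * norm (X ^ k * q ^ (k choose 2))"
  proof -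
    fix k assume k: "N \<le> k"
    have e0: "(Suc k choose (Suc (Suc 0))) = (k choose (Suc 0)) + (k choose (Suc (Suc 0)))" by (rule binomial_Suc_Suc)
    hence e: "(Suc k choose 2) = (k choose 2) + k" by (simp add: numeral_2_eq_2)
    have "X ^ Suc k * q ^ (Suc k choose 2) = (X * q ^ k) * (X ^ k * q ^ (k choose 2))"
      unfolding e by (simp add: power_add algebra_simps)
    also have "\<dots> \<le> 1/2 * (X ^ k * q ^ (k choose 2))"
      using N[OF k] q X by (intro mult_right_mono) auto
    finally show "norm (X ^ Suc k * q ^ (Suc k choose 2)) \<le> 1/2 * norm (X ^ k * q ^ (k choose 2))"
      using q X by simp
  qed
  qed simp
qed


lemma powr_lt1: "0 < q \<Longrightarrow> q < 1 \<Longrightarrow> c > 0 \<Longrightarrow> q powr c < (1::real)"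
  using powr_less_mono2[of c q 1] by simp

lemma qpow_lin_eq:
  assumes q: "0 < q"
  shows "qpow q (of_real (c * real n) + d) = of_real ((q powr c) ^ n) * qpow q d"
proof -
  have "qpow q (of_real (c * real n) + d) = exp (of_real (c * real n * ln q)) * qpow q d"
    unfolding qpow_def by (simp add: distrib_right exp_add)
  also have "exp (of_real (c * real n * ln q)) = (of_real (exp (c * real n * ln q)) :: complex)"
    by (rule exp_of_real)
  also have "exp (c * real n * ln q) = q powr (c * real n)"
    using q by (simp add: powr_def)
  also have "q powr (c * real n) = (q powr c) ^ n"
    using q by (simp add: powr_powr[symmetric] powr_realpow)
  finally show ?thesis .
qed

lemma qpow_lin_tendsto0:
  assumes q: "0 < q" "q < 1" and c: "c > 0"
  shows "(\<lambda>n. qpow q (of_real (c * real n) + d)) \<longlonglongrightarrow> 0"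
proof -
  have "(\<lambda>n. of_real ((q powr c) ^ n) * qpow q d) \<longlonglongrightarrow> of_real 0 * qpow q d"
    using powr_lt1[OF q c] q
    by (intro tendsto_mult tendsto_const tendsto_of_real LIMSEQ_power_zero) auto
  thus ?thesis using qpow_lin_eq[OF q(1)] by simp
qed

lemma qnum_base_lim:
  assumes q: "0 < q" "q < 1" and c: "c > 0"
  shows "(\<lambda>n. qnum_base q c n) \<longlonglongrightarrow> 1 / (1 - q powr c)"
proof -
  have e: "qnum_base q c n = (1 - (q powr c) ^ n) / (1 - q powr c)" for n
    unfolding qnum_base_def using q by (simp add: powr_powr[symmetric] powr_realpow)
  have "(\<lambda>n. (1 - (q powr c) ^ n) / (1 - q powr c)) \<longlonglongrightarrow> (1 - 0) / (1 - q powr c)"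
    using powr_lt1[OF q c] q
    by (intro tendsto_intros LIMSEQ_power_zero) auto
  thus ?thesis unfolding e by simp
qed

lemma nz_q:
  assumes q: "0 < q" "q < 1"
  shows "of_real q * of_real q ^ j \<noteq> (1::complex)"
proof -
  have "q ^ j \<le> 1" using q by (simp add: power_le_one)
  hence "q * q ^ j \<le> q * 1" by (rule mult_left_mono) (use q in auto)
  hence "q * q ^ j < 1" using q by linarith
  hence "q * q ^ j \<noteq> 1" by simp
  thus ?thesis by (metis of_real_1 of_real_eq_iff of_real_mult of_real_power)
qed

lemma nz_alpha:
  assumes q: "0 < q" "q < 1" and \<alpha>: "\<alpha> \<notin> \<int>\<^sub>\<le>\<^sub>0"
  shows "qpow q (of_real \<alpha>) * of_real q ^ j \<noteq> 1"
proof -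
  have "\<alpha> + real j \<noteq> 0"
  proof
    assume "\<alpha> + real j = 0"
    hence "\<alpha> = - of_nat j" by simp
    thus False using \<alpha> by auto
  qed
  hence "q powr (\<alpha> + real j) \<noteq> 1" using q by (simp add: powr_eq_one_iff_gen)
  hence "q powr \<alpha> * q ^ j \<noteq> 1" using q by (simp add: powr_add powr_realpow)
  thus ?thesis using q
    by (simp add: qpow_real) (metis of_real_1 of_real_eq_iff of_real_mult of_real_power)
qed

lemma Pn_eq:
  assumes q: "0 < q" and lam: "lam = q ^ n * mu"
  shows "qpoch (qpow q (- of_nat n)) q k * of_real lam ^ k
       = of_real (\<Prod>j<k. (q ^ n - q ^ j) * mu)"
proof -
  have qp: "qpow q (- of_nat n) = of_real (inverse (q ^ n))"
    using qpow_real[OF q, of "- real n"] q by (simp add: powr_minus powr_realpow)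
  have "qpoch (qpow q (- of_nat n)) q k = of_real (\<Prod>j<k. 1 - inverse (q ^ n) * q ^ j)"
    unfolding qpoch_def qp by simp
  moreover have "(of_real lam ^ k :: complex) = of_real (\<Prod>j<k. lam)" by simp
  ultimately have "qpoch (qpow q (- of_nat n)) q k * of_real lam ^ k
      = of_real (\<Prod>j<k. (1 - inverse (q ^ n) * q ^ j) * lam)"
    by (simp add: prod.distrib)
  also have "(\<Prod>j<k. (1 - inverse (q ^ n) * q ^ j) * lam) = (\<Prod>j<k. (q ^ n - q ^ j) * mu)"
    using q unfolding lam by (intro prod.cong refl) (simp add: field_simps)
  finally show ?thesis .
qed

lemma Pn_bound:
  fixes q mu L :: real
  assumes q: "0 < q" "q < 1" and mu: "\<bar>mu\<bar> \<le> L"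
  shows "\<bar>\<Prod>j<k. (q ^ n - q ^ j) * mu\<bar> \<le> q ^ (k choose 2) * L ^ k"
proof (cases "k \<le> n")
  case True
  have "\<bar>\<Prod>j<k. (q ^ n - q ^ j) * mu\<bar> = (\<Prod>j<k. \<bar>q ^ n - q ^ j\<bar> * \<bar>mu\<bar>)"
    by (simp add: abs_prod abs_mult)
  also have "\<dots> \<le> (\<Prod>j<k. q ^ j * L)"
  proof (rule prod_mono)
    fix j assume j: "j \<in> {..<k}"
    hence "j \<le> n" using True by auto
    hence "q ^ n \<le> q ^ j" using q by (intro power_decreasing) auto
    moreover have "0 \<le> q ^ n" using q by simp
    ultimately have "\<bar>q ^ n - q ^ j\<bar> \<le> q ^ j" by linarith
    thus "0 \<le> \<bar>q ^ n - q ^ j\<bar> * \<bar>mu\<bar> \<and> \<bar>q ^ n - q ^ j\<bar> * \<bar>mu\<bar> \<le> q ^ j * L"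
      using mu by (auto intro: mult_mono)
  qed
  also have "\<dots> = q ^ (k choose 2) * L ^ k"
    by (simp add: prod.distrib prod_qpow_binom)
  finally show ?thesis .
next
  case False
  hence "n \<in> {..<k}" by auto
  hence z: "(\<Prod>j<k. (q ^ n - q ^ j) * mu) = 0"
    by (intro prod_zero) auto
  have "0 \<le> L" using mu by linarith
  hence "0 \<le> q ^ (k choose 2) * L ^ k" using q by simp
  thus ?thesis unfolding z by simp
qed



lemma div_div_common: "t \<noteq> 0 \<Longrightarrow> (x / t) / (y / t) = (x / y :: real)"
  by (cases "y = 0") (simp_all add: field_simps)

theorem theorem1:
  fixes q \<alpha> :: real and s :: nat
    and a c :: "nat \<Rightarrow> real" and b d :: "nat \<Rightarrow> complex"
  assumes q: "0 < q" "q < 1"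
    and s: "s \<ge> 1"
    and \<alpha>: "\<alpha> \<notin> \<int>\<^sub>\<le>\<^sub>0"
    and ac_pos: "\<And>j. j \<in> {1..s-1} \<Longrightarrow> a j > 0 \<and> c j > 0"
    and b_cond: "\<And>j n. j \<in> {1..s-1} \<Longrightarrow> n \<ge> 1 \<Longrightarrow> a j * real n + Re (b j) \<notin> \<int>\<^sub>\<le>\<^sub>0"
    and d_cond: "\<And>j n. j \<in> {1..s-1} \<Longrightarrow> n \<ge> 1 \<Longrightarrow> c j * real n + Re (d j) \<notin> \<int>\<^sub>\<le>\<^sub>0"
  defines "A \<equiv> (\<Prod>j\<in>{1..s-1}. Re (qnum q (of_real (a j)))) / (\<Prod>j\<in>{1..s-1}. Re (qnum q (of_real (c j))))"
    and "lam \<equiv> (\<lambda>n::nat. q powr (real n + \<alpha>) * (\<Prod>j\<in>{1..s-1}. qnum_base q (c j) n)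
                 / (Re (qnum q (of_nat n)) * (\<Prod>j\<in>{1..s-1}. qnum_base q (a j) n)) * (q - 1))"
  shows "(\<forall>K. compact K \<longrightarrow>
           uniform_limit K
             (\<lambda>n z. bhyp (qpow q (- of_nat n) # map (\<lambda>j. qpow q (of_real (a j * real n) + b j)) [1..<s])
                          (qpow q (of_real \<alpha>) # map (\<lambda>j. qpow q (of_real (c j * real n) + d j)) [1..<s])
                          q (of_real (lam n) * z))
             (\<lambda>z. bhyp [] [qpow q (of_real \<alpha>)] q (- of_real A * z * of_real ((q - 1)^2) * qpow q (of_real \<alpha>)))
             sequentially)
       \<and> (\<forall>z. z \<noteq> 0 \<longrightarrow>
           bhyp [] [qpow q (of_real \<alpha>)] q (- of_real A * z * of_real ((q - 1)^2) * qpow q (of_real \<alpha>))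
           = (of_real A * z) powr (of_real ((1 - \<alpha>) / 2)) * qGamma q (of_real \<alpha>)
             * qBesselJ2 (of_real (\<alpha> - 1)) (2 * of_real (1 - q) * csqrt (of_real A * z)) q)"
proof -
  define I where "I = {1..s-1}"
  have finI: "finite I" unfolding I_def by simp
  have cardI: "card I = s - 1" unfolding I_def by simp
  have setI: "set [1..<s] = I" unfolding I_def using s by auto
  have plist: "\<And>g. prod_list (map g [1..<s]) = prod g I"
    using prod.distinct_set_conv_list[of "[1..<s]"] setI by (metis distinct_upt)
  have plist': "\<And>g. prod_list (map g [Suc 0..<s]) = prod g I"
    using plist by simp
  have apos: "\<And>j. j \<in> I \<Longrightarrow> a j > 0" and cpos: "\<And>j. j \<in> I \<Longrightarrow> c j > 0"
    using ac_pos unfolding I_def by auto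
  have q1: "1 - q \<noteq> 0" using q by simp
  have qnr: "\<And>x. Re (qnum q (of_real x)) = (1 - q powr x) / (1 - q)"
  proof -
    fix x
    have "qnum q (of_real x) = of_real ((1 - q powr x) / (1 - q))"
      unfolding qnum_def using q by (simp add: qpow_real)
    thus "Re (qnum q (of_real x)) = (1 - q powr x) / (1 - q)" by simp
  qed
  have qnn: "\<And>n. Re (qnum q (of_nat n)) = (1 - q ^ n) / (1 - q)"
    using qnr[of "real _"] q by (simp add: powr_realpow)
  have AA: "A = (\<Prod>j\<in>I. (1 - q powr a j) / (1 - q powr c j))"
  proof -
    have "A = (\<Prod>j\<in>I. ((1 - q powr a j) / (1 - q)) / ((1 - q powr c j) / (1 - q)))"
      unfolding A_def I_def[symmetric] qnr using q by (simp add: prod_dividef)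
    also have "\<dots> = (\<Prod>j\<in>I. (1 - q powr a j) / (1 - q powr c j))"
      using q1 by (intro prod.cong refl div_div_common)
    finally show ?thesis .
  qed
  have Apos: "A > 0" unfolding AA
    using powr_lt1[OF q] apos cpos by (intro prod_pos) (simp add: divide_pos_pos)
  define mu where "mu n = q powr \<alpha> * (\<Prod>j\<in>I. qnum_base q (c j) n / qnum_base q (a j) n) / ((1 - q ^ n) / (1 - q)) * (q - 1)" for n
  define muL where "muL = - A * (q - 1)^2 * q powr \<alpha>"
  have lam_eq: "lam n = q ^ n * mu n" for n
    unfolding lam_def mu_def I_def[symmetric] qnn using q
    by (simp add: powr_add powr_realpow prod_dividef ac_simps)
  have mu_lim: "mu \<longlonglongrightarrow> muL"
  proof -
    have r: "(\<lambda>n. qnum_base q (c j) n / qnum_base q (a j) n) \<longlonglongrightarrow> (1 - q powr a j) / (1 - q powr c j)"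
      if j: "j \<in> I" for j
    proof -
      have "(\<lambda>n. qnum_base q (c j) n / qnum_base q (a j) n) \<longlonglongrightarrow> (1 / (1 - q powr c j)) / (1 / (1 - q powr a j))"
        using powr_lt1[OF q apos[OF j]]
        by (intro tendsto_divide qnum_base_lim q apos cpos j) auto
      thus ?thesis by simp
    qed
    have p: "(\<lambda>n. \<Prod>j\<in>I. qnum_base q (c j) n / qnum_base q (a j) n) \<longlonglongrightarrow> A"
      unfolding AA by (intro tendsto_prod r)
    have "(\<lambda>n. (1 - q ^ n) / (1 - q)) \<longlonglongrightarrow> (1 - 0) / (1 - q)"
      using q by (intro tendsto_intros LIMSEQ_power_zero) auto
    hence "mu \<longlonglongrightarrow> q powr \<alpha> * A / ((1 - 0) / (1 - q)) * (q - 1)"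
      unfolding mu_def using q1 q by (intro tendsto_intros p) auto
    moreover have "q powr \<alpha> * A / ((1 - 0) / (1 - q)) * (q - 1) = muL"
      unfolding muL_def by (simp add: power2_eq_square algebra_simps)
    ultimately show ?thesis by simp
  qed
  define an where "an j n = qpow q (of_real (a j * real n) + b j)" for j n
  define dn where "dn j n = qpow q (of_real (c j * real n) + d j)" for j n
  define Na where "Na n k = (\<Prod>j\<in>I. qpoch (an j n) q k)" for n k
  define Dn where "Dn n k = (\<Prod>j\<in>I. qpoch (dn j n) q k)" for n k
  define Pn where "Pn n k = qpoch (qpow q (- of_nat n)) q k * of_real (lam n) ^ k" for n k
  define Qa where "Qa k = qpoch (qpow q (of_real \<alpha>)) q k" for k
  define Qq where "Qq k = qpoch (of_real q) q k" for k
  define sg where "sg k = ((-1) ^ k * of_real q ^ (k choose 2) :: complex)" for k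
  define C where "C k n = Na n k / Dn n k * Pn n k * sg k / (Qa k * Qq k)" for k n
  define muc where "muc = (of_real muL :: complex)"
  define Cl where "Cl k = sg k * sg k * muc ^ k / (Qa k * Qq k)" for k
  have E1: "bhyp (qpow q (- of_nat n) # map (\<lambda>j. qpow q (of_real (a j * real n) + b j)) [1..<s])
                 (qpow q (of_real \<alpha>) # map (\<lambda>j. qpow q (of_real (c j * real n) + d j)) [1..<s])
                 q (of_real (lam n) * z) = (\<Sum>k. C k n * z ^ k)" for n z
  proof -
    have len1: "length (qpow q (- of_nat n) # map (\<lambda>j. qpow q (of_real (a j * real n) + b j)) [1..<s]) = s"
      using s by simp
    have len2: "length (qpow q (of_real \<alpha>) # map (\<lambda>j. qpow q (of_real (c j * real n) + d j)) [1..<s]) = s"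
      using s by simp
    have qp1: "qpochs (qpow q (- of_nat n) # map (\<lambda>j. qpow q (of_real (a j * real n) + b j)) [1..<s]) q k
        = qpoch (qpow q (- of_nat n)) q k * Na n k" for k
      unfolding qpochs_def Na_def an_def by (simp add: o_def plist')
    have qp2: "qpochs (qpow q (of_real \<alpha>) # map (\<lambda>j. qpow q (of_real (c j * real n) + d j)) [1..<s]) q k
        = Qa k * Dn n k" for k
      unfolding qpochs_def Dn_def dn_def Qa_def by (simp add: o_def plist')
    show ?thesis
      unfolding bhyp_def len1 len2 qp1 qp2
    proof (rule arg_cong[where f = suminf], rule ext)
      fix k
      show "qpoch (qpow q (- of_nat n)) q k * Na n k / (Qa k * Dn n k) *
          ((- 1) ^ k * complex_of_real q ^ (k choose 2)) powi (1 + int s - int s) *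
          (complex_of_real (lam n) * z) ^ k / qpoch (complex_of_real q) q k = C k n * z ^ k"
        unfolding C_def Pn_def sg_def Qq_def
        by (simp add: divide_inverse power_mult_distrib ac_simps)
    qed
  qed
  have E2: "bhyp [] [qpow q (of_real \<alpha>)] q (- of_real A * z * of_real ((q - 1)^2) * qpow q (of_real \<alpha>))
       = (\<Sum>k. Cl k * z ^ k)" for z
  proof -
    have w: "- of_real A * z * of_real ((q - 1)^2) * qpow q (of_real \<alpha>) = muc * z"
      unfolding muc_def muL_def using q by (simp add: qpow_real)
    show ?thesis
      unfolding bhyp_def w
    proof (rule arg_cong[where f = suminf], rule ext)
      fix k
      have p2: "x powi (1 + int (length [qpow q (of_real \<alpha>)]) - int (length ([]::complex list))) = x * x" for x :: complex
        by (simp add: power2_eq_square)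
      show "qpochs [] q k / qpochs [qpow q (complex_of_real \<alpha>)] q k *
          ((- 1) ^ k * complex_of_real q ^ (k choose 2)) powi (1 + int (length [qpow q (of_real \<alpha>)]) - int (length ([]::complex list))) *
          (muc * z) ^ k / qpoch (complex_of_real q) q k = Cl k * z ^ k"
        unfolding p2 Cl_def sg_def Qq_def Qa_def qpochs_def
        by (simp add: divide_inverse power_mult_distrib ac_simps)
    qed
  qed
  obtain \<delta>1 where d1: "\<delta>1 > 0" "\<And>k. \<delta>1 ^ k \<le> norm (Qa k)"
    unfolding Qa_def using qpoch_lower[OF q nz_alpha[OF q \<alpha>]] by blast
  obtain \<delta>2 where d2: "\<delta>2 > 0" "\<And>k. \<delta>2 ^ k \<le> norm (Qq k)"
    unfolding Qq_def using qpoch_lower[OF q nz_q[OF q]] by blast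
  have Qa0: "Qa k \<noteq> 0" for k
    using d1(2)[of k] zero_less_power[OF d1(1), of k] by auto
  have Qq0: "Qq k \<noteq> 0" for k
    using d2(2)[of k] zero_less_power[OF d2(1), of k] by auto
  have Pe: "Pn n k = of_real (\<Prod>j<k. (q ^ n - q ^ j) * mu n)" for n k
    unfolding Pn_def by (rule Pn_eq[OF q(1) lam_eq])
  have Clim: "(\<lambda>n. C k n) \<longlonglongrightarrow> Cl k" for k
  proof -
    have Na1: "(\<lambda>n. Na n k) \<longlonglongrightarrow> 1"
    proof -
      have "(\<lambda>n. \<Prod>j\<in>I. qpoch (an j n) q k) \<longlonglongrightarrow> (\<Prod>j\<in>I. 1)"
        unfolding an_def by (intro tendsto_prod qpoch_tendsto_1 qpow_lin_tendsto0 q apos)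
      thus ?thesis unfolding Na_def by simp
    qed
    have Dn1: "(\<lambda>n. Dn n k) \<longlonglongrightarrow> 1"
    proof -
      have "(\<lambda>n. \<Prod>j\<in>I. qpoch (dn j n) q k) \<longlonglongrightarrow> (\<Prod>j\<in>I. 1)"
        unfolding dn_def by (intro tendsto_prod qpoch_tendsto_1 qpow_lin_tendsto0 q cpos)
      thus ?thesis unfolding Dn_def by simp
    qed
    have "(\<lambda>n. (\<Prod>j<k. (q ^ n - q ^ j) * mu n)) \<longlonglongrightarrow> (\<Prod>j<k. (0 - q ^ j) * muL)"
      using q by (intro tendsto_prod tendsto_intros mu_lim LIMSEQ_power_zero) auto
    hence P1: "(\<lambda>n. Pn n k) \<longlonglongrightarrow> of_real (\<Prod>j<k. (0 - q ^ j) * muL)"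
      unfolding Pe by (rule tendsto_of_real)
    have L: "(\<lambda>n. C k n) \<longlonglongrightarrow> 1 / 1 * of_real (\<Prod>j<k. (0 - q ^ j) * muL) * sg k / (Qa k * Qq k)"
      unfolding C_def using Qa0 Qq0 by (intro tendsto_intros Na1 Dn1 P1) auto
    moreover have eq1: "(\<Prod>j<k. (0 - q ^ j) * muL) = (\<Prod>j<k. (- muL) * q ^ j)"
      by (intro prod.cong refl) simp
    moreover have eq2: "(\<Prod>j<k. (- muL) * q ^ j) = (-1) ^ k * muL ^ k * q ^ (k choose 2)"
    proof -
      have "(\<Prod>j<k. (- muL) * q ^ j) = (\<Prod>j<k. (- muL)) * (\<Prod>j<k. q ^ j)"
        by (rule prod.distrib)
      also have "\<dots> = (- muL) ^ k * q ^ (k choose 2)"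
        by (simp only: prod_qpow_binom prod_constant card_lessThan)
      also have "(- muL) ^ k = (-1) ^ k * muL ^ k"
        by (rule power_minus)
      finally show ?thesis .
    qed
    moreover have E: "1 / 1 * of_real (\<Prod>j<k. (0 - q ^ j) * muL) * sg k / (Qa k * Qq k) = Cl k"
      unfolding eq1 eq2 Cl_def sg_def muc_def by (simp add: field_simps Qa0 Qq0)
    show ?thesis using L unfolding E .
  qed
  obtain D where D0: "D \<ge> 0" and DB: "\<forall>\<^sub>F n in sequentially. \<forall>k. norm (C k n) \<le> D ^ k * q ^ (k choose 2)"
  proof -
    define L where "L = \<bar>muL\<bar> + 1"
    define m where "m = card I"
    define D where "D = 4 ^ m * L / (\<delta>1 * \<delta>2)"
    have L0: "L > 0" unfolding L_def by simp
    have D0: "D \<ge> 0" unfolding D_def using L0 d1 d2 by simp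
    have ev1: "\<forall>\<^sub>F n in sequentially. \<forall>j\<in>I. norm (an j n) \<le> 1"
    proof (rule eventually_ball_finite[OF finI], intro ballI)
      fix j assume j: "j \<in> I"
      have "an j \<longlonglongrightarrow> 0" unfolding an_def by (rule qpow_lin_tendsto0[OF q apos[OF j]])
      hence "\<forall>\<^sub>F n in sequentially. norm (an j n) < 1"
        by (intro order_tendstoD) (auto intro: tendsto_norm_zero)
      thus "\<forall>\<^sub>F n in sequentially. norm (an j n) \<le> 1" by eventually_elim simp
    qed
    have ev2: "\<forall>\<^sub>F n in sequentially. \<forall>j\<in>I. norm (dn j n) \<le> 1/2"
    proof (rule eventually_ball_finite[OF finI], intro ballI)
      fix j assume j: "j \<in> I"
      have "dn j \<longlonglongrightarrow> 0" unfolding dn_def by (rule qpow_lin_tendsto0[OF q cpos[OF j]])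
      hence "\<forall>\<^sub>F n in sequentially. norm (dn j n) < 1/2"
        by (intro order_tendstoD) (auto intro: tendsto_norm_zero)
      thus "\<forall>\<^sub>F n in sequentially. norm (dn j n) \<le> 1/2" by eventually_elim simp
    qed
    have ev3: "\<forall>\<^sub>F n in sequentially. \<bar>mu n\<bar> \<le> L"
    proof -
      have "\<forall>\<^sub>F n in sequentially. dist (mu n) muL < 1"
        using mu_lim by (rule tendstoD) simp
      thus ?thesis unfolding L_def by eventually_elim (auto simp: dist_real_def)
    qed
    have "\<forall>\<^sub>F n in sequentially. \<forall>k. norm (C k n) \<le> D ^ k * q ^ (k choose 2)"
      using ev1 ev2 ev3
    proof eventually_elim
      case (elim n)
      show ?case
      proof
        fix k
        have NaB: "norm (Na n k) \<le> (2 ^ k) ^ m"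
        proof -
          have "norm (Na n k) = (\<Prod>j\<in>I. norm (qpoch (an j n) q k))"
            unfolding Na_def by (rule prod_norm[symmetric])
          also have "\<dots> \<le> (\<Prod>j\<in>I. 2 ^ k)"
            by (rule prod_mono) (use elim(1) qpoch_le[OF q] in auto)
          finally show ?thesis unfolding m_def by simp
        qed
        have DnB: "((1/2) ^ k) ^ m \<le> norm (Dn n k)"
        proof -
          have "(\<Prod>j\<in>I. (1/2) ^ k) \<le> (\<Prod>j\<in>I. norm (qpoch (dn j n) q k))"
            by (rule prod_mono) (use elim(2) qpoch_ge_half[OF q] in auto)
          also have "\<dots> = norm (Dn n k)"
            unfolding Dn_def by (rule prod_norm)
          finally show ?thesis unfolding m_def by simp
        qed
        have PnB: "norm (Pn n k) \<le> q ^ (k choose 2) * L ^ k"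
          unfolding Pe norm_of_real by (rule Pn_bound[OF q elim(3)])
        have sgB: "norm (sg k) \<le> 1"
          unfolding sg_def using q by (simp add: norm_mult norm_power power_le_one)
        have QB: "\<delta>1 ^ k * \<delta>2 ^ k \<le> norm (Qa k * Qq k)"
          unfolding norm_mult using d1 d2 by (intro mult_mono) auto
        have pos1: "0 < ((1/2::real) ^ k) ^ m" by simp
        have A1: "norm (Na n k) / norm (Dn n k) \<le> (2 ^ k) ^ m / ((1/2) ^ k) ^ m"
          by (rule frac_le) (use NaB DnB pos1 in auto)
        have A2: "norm (Na n k) / norm (Dn n k) * norm (Pn n k) * norm (sg k)
            \<le> (2 ^ k) ^ m / ((1/2) ^ k) ^ m * (q ^ (k choose 2) * L ^ k) * 1"
          using A1 PnB sgB q L0 by (intro mult_mono) auto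
        have "norm (C k n) = norm (Na n k) / norm (Dn n k) * norm (Pn n k) * norm (sg k) / norm (Qa k * Qq k)"
          unfolding C_def by (simp add: norm_mult norm_divide)
        also have "\<dots> \<le> (2 ^ k) ^ m / ((1/2) ^ k) ^ m * (q ^ (k choose 2) * L ^ k) * 1 / (\<delta>1 ^ k * \<delta>2 ^ k)"
          by (rule frac_le) (use A2 QB d1 d2 q L0 in auto)
        also have "\<dots> = D ^ k * q ^ (k choose 2)"
        proof -
          have "(2 ^ k) ^ m / ((1/2) ^ k) ^ m = ((2::real) ^ k / (1/2) ^ k) ^ m" by (rule power_divide[symmetric])
          also have "(2::real) ^ k / (1/2) ^ k = 4 ^ k" by (simp add: power_divide[symmetric])
          also have "((4::real) ^ k) ^ m = (4 ^ m) ^ k" by (simp add: power_mult[symmetric] mult.commute)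
          finally have "(2 ^ k) ^ m / ((1/2) ^ k) ^ m = ((4::real) ^ m) ^ k" .
          thus ?thesis unfolding D_def using d1 d2
            by (simp add: power_divide power_mult_distrib field_simps)
        qed
        finally show "norm (C k n) \<le> D ^ k * q ^ (k choose 2)" .
      qed
    qed
    with D0 show ?thesis using that by blast
  qed
  then obtain N where N: "\<And>n k. n \<ge> N \<Longrightarrow> norm (C k n) \<le> D ^ k * q ^ (k choose 2)"
    unfolding eventually_sequentially by blast
  have part1: "uniform_limit K (\<lambda>n z. \<Sum>k. C k n * z ^ k) (\<lambda>z. \<Sum>k. Cl k * z ^ k) sequentially"
    if K: "compact K" for K
  proof -
    obtain R where R: "\<And>z. z \<in> K \<Longrightarrow> norm z \<le> R"
      using compact_imp_bounded[OF K] unfolding bounded_iff by blast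
    define R' where "R' = max R 0"
    have R': "\<And>z. z \<in> K \<Longrightarrow> norm z \<le> R'" "R' \<ge> 0" unfolding R'_def using R by force+
    show ?thesis
    proof (rule unif_tannery[where N = N and M = "\<lambda>k. (D * R') ^ k * q ^ (k choose 2)"])
      show "uniform_limit K (\<lambda>n z. C k n * z ^ k) (\<lambda>z. Cl k * z ^ k) sequentially" for k
        by (rule ul_poly_term[OF Clim R'(1)])
      show "summable (\<lambda>k. (D * R') ^ k * q ^ (k choose 2))"
        using q D0 R'(2) by (intro summable_binom_geom) auto
      show "norm (C k n * z ^ k) \<le> (D * R') ^ k * q ^ (k choose 2)" if "N \<le> n" "z \<in> K" for k n z
      proof -
        have "norm (z ^ k) \<le> R' ^ k" unfolding norm_power
          using R'(1)[OF that(2)] by (intro power_mono) auto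
        hence "norm (C k n) * norm (z ^ k) \<le> (D ^ k * q ^ (k choose 2)) * R' ^ k"
          using N[OF that(1)] D0 q by (intro mult_mono) auto
        thus ?thesis by (simp add: norm_mult power_mult_distrib algebra_simps)
      qed
    qed
  qed
  show ?thesis
  proof (intro conjI allI impI)
    fix K :: "complex set" assume K: "compact K"
    show "uniform_limit K
             (\<lambda>n z. bhyp (qpow q (- of_nat n) # map (\<lambda>j. qpow q (of_real (a j * real n) + b j)) [1..<s])
                          (qpow q (of_real \<alpha>) # map (\<lambda>j. qpow q (of_real (c j * real n) + d j)) [1..<s])
                          q (of_real (lam n) * z))
             (\<lambda>z. bhyp [] [qpow q (of_real \<alpha>)] q (- of_real A * z * of_real ((q - 1)^2) * qpow q (of_real \<alpha>)))
             sequentially"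
      unfolding E1 E2 by (rule part1[OF K])
  next
    fix z :: complex assume "z \<noteq> 0"
    hence "of_real A * z \<noteq> 0" using Apos by simp
    thus "bhyp [] [qpow q (of_real \<alpha>)] q (- of_real A * z * of_real ((q - 1)^2) * qpow q (of_real \<alpha>))
           = (of_real A * z) powr (of_real ((1 - \<alpha>) / 2)) * qGamma q (of_real \<alpha>)
             * qBesselJ2 (of_real (\<alpha> - 1)) (2 * of_real (1 - q) * csqrt (of_real A * z)) q"
      by (rule part2[OF q \<alpha>])
  qed
qed


end
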